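(* For every positive integer $n$ and every $t\in\{1,2,3\}$, $$M(n,t)\le \sum_{\mathbf{x}\in\{0,1\}^n}\frac{1}{|\Phi_t(\mathbf{x})|}.$$
   Context: A grain pattern of length $n$ is a subset $E\subseteq\{2,\dots,n\}$ containing no two consecutive integers. For such $E$, the map $\phi_E:\{0,1\}^n\to\{0,1\}^n$ sends $\mathbf{x}=(x_1,\dots,x_n)$ to $\mathbf{y}$ with $y_j=x_{j-1}$ if $j\in E$ and $y_j=x_j$ otherwise. For $t\ge0$, $\mathcal{E}_{n,t}$ is the set of grain patterns of length $n$ with $|E|\le t$, and $\Phi_t(\mathbf{x})=\{\phi_E(\mathbf{x}):E\in\mathcal{E}_{n,t}\}$. Two words $\mathbf{x}_1,\mathbf{x}_2$ are $t$-confusable if $\Phi_t(\mathbf{x}_1)\cap\Phi_t(\mathbf{x}_2)\ne\emptyset$. A code $\mathcal{C}\subseteq\{0,1\}^n$ is $t$-grain-correcting if no two distinct codewords are $t$-confusable. $M(n,t)$ is the maximum cardinality of a $t$-grain-correcting code of length $n$. *)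

theory Defs
  imports Complex_Main
begin

text \<open>Binary words of length n are bool lists of length n; position j (1-based) is xs ! (j - 1).\<close>

definition words :: "nat \<Rightarrow> bool list set" where
  "words n = {xs. length xs = n}"

definition grain_pattern :: "nat \<Rightarrow> nat set \<Rightarrow> bool" where
  "grain_pattern n E \<longleftrightarrow> E \<subseteq> {2..n} \<and> (\<forall>j\<in>E. Suc j \<notin> E)"

definition phi :: "nat \<Rightarrow> nat set \<Rightarrow> bool list \<Rightarrow> bool list" where
  "phi n E x = map (\<lambda>j. if j \<in> E then x ! (j - 2) else x ! (j - 1)) [1..<Suc n]"

definition grain_patterns :: "nat \<Rightarrow> nat \<Rightarrow> nat set set" where
  "grain_patterns n t = {E. grain_pattern n E \<and> card E \<le> t}"

definition Phi :: "nat \<Rightarrow> nat \<Rightarrow> bool list \<Rightarrow> bool list set" where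
  "Phi n t x = {phi n E x | E. E \<in> grain_patterns n t}"

definition confusable :: "nat \<Rightarrow> nat \<Rightarrow> bool list \<Rightarrow> bool list \<Rightarrow> bool" where
  "confusable n t x1 x2 \<longleftrightarrow> Phi n t x1 \<inter> Phi n t x2 \<noteq> {}"

definition grain_correcting :: "nat \<Rightarrow> nat \<Rightarrow> bool list set \<Rightarrow> bool" where
  "grain_correcting n t C \<longleftrightarrow> C \<subseteq> words n \<and>
     (\<forall>x1\<in>C. \<forall>x2\<in>C. x1 \<noteq> x2 \<longrightarrow> \<not> confusable n t x1 x2)"

definition M :: "nat \<Rightarrow> nat \<Rightarrow> nat" where
  "M n t = Max {card C | C. grain_correcting n t C}"

end

theory Submission
  imports Defs
begin

definition nc :: "nat \<Rightarrow> nat set \<Rightarrow> nat set set" where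
  "nc t B = {D. D \<subseteq> B \<and> (\<forall>j\<in>D. Suc j \<notin> D) \<and> card D \<le> t}"

definition Fm :: "nat set \<Rightarrow> nat set \<times> nat set \<Rightarrow> nat set \<times> nat set" where
  "Fm B p = (let D = fst p; D' = snd p; A = B - D - Suc ` D;
     bad = {j\<in>D. j - 1 \<in> D' \<inter> A \<and> Suc j \<in> D'};
     D'' = (D' \<inter> A) \<union> ((\<lambda>k. k - 1) ` (D' - A))
   in ((D - bad) \<union> (\<lambda>j. j - 1) ` bad, D'' - (\<lambda>j. j - 1) ` bad))"

definition Gm :: "nat set \<Rightarrow> nat set \<times> nat set \<Rightarrow> nat set \<times> nat set" where
  "Gm B q = (let Dt = fst q; E = snd q; bad = {e\<in>E. e - 1 \<in> Dt};
     D = (Dt - (\<lambda>j. j - 1) ` bad) \<union> bad; A = B - D - Suc ` D;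
     D'' = E \<union> (\<lambda>j. j - 1) ` bad
   in (D, (D'' \<inter> A) \<union> Suc ` (D'' \<inter> D)))"

lemma FG:
  assumes finB: "finite B" and B0: "0 \<notin> B" and DB: "D \<subseteq> B" and Dnc: "\<forall>j\<in>D. Suc j \<notin> D"
    and D'B: "D' \<subseteq> (B - D - Suc ` D) \<union> (Suc ` D - B)" and D'nc: "\<forall>j\<in>D'. Suc j \<notin> D'"
  shows "Gm B (Fm B (D, D')) = (D, D') \<and>
     fst (Fm B (D, D')) \<subseteq> B \<and> (\<forall>j\<in>fst (Fm B (D, D')). Suc j \<notin> fst (Fm B (D, D'))) \<and>
     card (fst (Fm B (D, D'))) \<le> card D \<and>
     snd (Fm B (D, D')) \<subseteq> B \<and> (\<forall>j\<in>snd (Fm B (D, D')). Suc j \<notin> snd (Fm B (D, D'))) \<and>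
     card (snd (Fm B (D, D'))) \<le> card D'"
proof -
  define A where "A = B - D - Suc ` D"
  define bad where "bad = {j\<in>D. j - 1 \<in> D' \<inter> A \<and> Suc j \<in> D'}"
  define D'' where "D'' = (D' \<inter> A) \<union> ((\<lambda>k. k - 1) ` (D' - A))"
  define Dt where "Dt = (D - bad) \<union> (\<lambda>j. j - 1) ` bad"
  define E where "E = D'' - (\<lambda>j. j - 1) ` bad"
  have F: "Fm B (D, D') = (Dt, E)"
    unfolding Fm_def Dt_def E_def D''_def bad_def A_def Let_def by simp
  have badD: "bad \<subseteq> D" unfolding bad_def by auto
  have bad2: "\<And>j. j \<in> bad \<Longrightarrow> j \<ge> 2"
  proof -
    fix j assume "j \<in> bad"
    then have "j - 1 \<in> B" "j \<in> B" using DB unfolding bad_def A_def by auto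
    then show "j \<ge> 2" using B0 by (cases j; cases "j - 1"; auto)
  qed
  have D'A: "\<And>k. k \<in> D' \<Longrightarrow> k \<notin> A \<Longrightarrow> k - 1 \<in> D \<and> k \<notin> B \<and> k = Suc (k - 1)"
    using D'B unfolding A_def by auto
  have D''B: "D'' \<subseteq> B"
  proof
    fix x assume "x \<in> D''"
    then show "x \<in> B"
    proof (unfold D''_def, elim UnE)
      assume "x \<in> D' \<inter> A" then show ?thesis unfolding A_def by auto
    next
      assume "x \<in> (\<lambda>k. k - 1) ` (D' - A)"
      then obtain k where "k \<in> D'" "k \<notin> A" "x = k - 1" by auto
      then show ?thesis using D'A DB by auto
    qed
  qed
  have D''D: "\<And>k. k \<in> D'' \<Longrightarrow> k \<in> D \<Longrightarrow> Suc k \<in> D' \<and> Suc k \<notin> A"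
  proof -
    fix k assume k: "k \<in> D''" "k \<in> D"
    then have "k \<notin> A" unfolding A_def by auto
    then obtain m where "m \<in> D'" "m \<notin> A" "k = m - 1" using k unfolding D''_def by auto
    then show "Suc k \<in> D' \<and> Suc k \<notin> A" using D'A by force
  qed
  have bad_char: "{e\<in>E. e - 1 \<in> Dt} = bad"
  proof (intro set_eqI iffI)
    fix e assume "e \<in> {e\<in>E. e - 1 \<in> Dt}"
    then have eE: "e \<in> E" and e1: "e - 1 \<in> Dt" by auto
    have eD'': "e \<in> D''" using eE unfolding E_def by auto
    have "e \<in> B" using eD'' D''B by auto
    then have e1': "e = Suc (e - 1)" using B0 by (cases e) auto
    show "e \<in> bad"
    proof (cases "e - 1 \<in> D - bad")
      case True
      then have ed: "e - 1 \<in> D" by auto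
      show ?thesis
      proof (cases "e \<in> D' \<inter> A")
        case True then show ?thesis using ed e1' unfolding A_def by (metis DiffD2 IntD2 imageI)
      next
        case False
        then obtain k where "k \<in> D'" "k \<notin> A" "e = k - 1" using eD'' unfolding D''_def by auto
        then have "e \<in> D" using D'A by auto
        then show ?thesis using ed e1' Dnc by metis
      qed
    next
      case False
      then obtain j where j: "j \<in> bad" "e - 1 = j - 1" using e1 unfolding Dt_def by auto
      then have "e = j" using bad2[OF j(1)] e1' by simp
      then show ?thesis using j by simp
    qed
  next
    fix e assume eb: "e \<in> bad"
    have "Suc e \<in> D'" "e \<in> D" using eb unfolding bad_def by auto
    moreover have "Suc e \<notin> A" using \<open>e \<in> D\<close> unfolding A_def by auto
    ultimately have "e \<in> D''" unfolding D''_def by force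
    moreover have "e \<notin> (\<lambda>j. j - 1) ` bad"
    proof
      assume "e \<in> (\<lambda>j. j - 1) ` bad"
      then obtain j where "j \<in> bad" "e = j - 1" by auto
      then have "j = Suc e" "j \<in> D" using bad2[of j] badD by auto
      then show False using \<open>e \<in> D\<close> Dnc by auto
    qed
    ultimately have "e \<in> E" unfolding E_def by auto
    moreover have "e - 1 \<in> Dt" using eb unfolding Dt_def by auto
    ultimately show "e \<in> {e\<in>E. e - 1 \<in> Dt}" by auto
  qed
  have badm1A: "(\<lambda>j. j - 1) ` bad \<subseteq> A \<inter> D'" unfolding bad_def by auto
  have AD: "A \<inter> D = {}" unfolding A_def by auto
  have r1: "(Dt - (\<lambda>j. j - 1) ` bad) \<union> bad = D"
    unfolding Dt_def using badD badm1A AD by auto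
  have r2: "E \<union> (\<lambda>j. j - 1) ` bad = D''"
    unfolding E_def D''_def using badm1A by auto
  have r3: "(D'' \<inter> A) \<union> Suc ` (D'' \<inter> D) = D'"
  proof (intro set_eqI iffI)
    fix k assume "k \<in> (D'' \<inter> A) \<union> Suc ` (D'' \<inter> D)"
    then show "k \<in> D'"
    proof
      assume kk: "k \<in> D'' \<inter> A"
      show ?thesis
      proof (rule ccontr)
        assume "k \<notin> D'"
        then obtain m where "m \<in> D'" "m \<notin> A" "k = m - 1" using kk unfolding D''_def by auto
        then have "k \<in> D" using D'A by auto
        then show False using kk AD by auto
      qed
    next
      assume "k \<in> Suc ` (D'' \<inter> D)"
      then show ?thesis using D''D by auto
    qed
  next
    fix k assume k: "k \<in> D'"
    show "k \<in> (D'' \<inter> A) \<union> Suc ` (D'' \<inter> D)"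
    proof (cases "k \<in> A")
      case True then show ?thesis using k unfolding D''_def by auto
    next
      case False
      then have "k - 1 \<in> D" "k = Suc (k - 1)" "k - 1 \<in> D''" using D'A k unfolding D''_def by auto
      then show ?thesis by (metis IntI UnI2 imageI)
    qed
  qed
  have G: "Gm B (Dt, E) = (D, D')"
    unfolding Gm_def Let_def fst_conv snd_conv bad_char r1 r2
    using r1 r2 r3 unfolding A_def by simp
  have c1: "Dt \<subseteq> B" unfolding Dt_def using DB badm1A unfolding A_def by auto
  have c2: "\<forall>j\<in>Dt. Suc j \<notin> Dt"
  proof (intro ballI notI)
    fix k assume k: "k \<in> Dt" "Suc k \<in> Dt"
    show False
    proof (cases "k \<in> D - bad")
      case True
      show False
      proof (cases "Suc k \<in> D - bad")
        case True then show False using \<open>k \<in> D - bad\<close> Dnc by auto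
      next
        case False
        then obtain j where "j \<in> bad" "Suc k = j - 1" using k unfolding Dt_def by auto
        then have "Suc k \<in> A" using badm1A by auto
        then show False using True unfolding A_def by auto
      qed
    next
      case False
      then obtain j where j: "j \<in> bad" "k = j - 1" using k unfolding Dt_def by auto
      then have sk: "Suc k = j" using bad2 by fastforce
      show False
      proof (cases "Suc k \<in> D - bad")
        case True then show False using sk j by auto
      next
        case False
        then obtain j' where "j' \<in> bad" "Suc k = j' - 1" using k unfolding Dt_def by auto
        then have "j' = Suc j" using sk bad2 by fastforce
        then show False using \<open>j' \<in> bad\<close> j badD Dnc by auto
      qed
    qed
  qed
  have finD: "finite D" using finB DB finite_subset by auto
  have finD': "finite D'" using D'B finB finD by (meson finite_Diff finite_Un finite_imageI finite_subset)
  have c3: "card Dt \<le> card D"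
  proof -
    have "card Dt \<le> card (D - bad) + card ((\<lambda>j. j - 1) ` bad)" unfolding Dt_def by (rule card_Un_le)
    also have "\<dots> \<le> card (D - bad) + card bad" using card_image_le finD badD finite_subset by (metis add_left_mono)
    also have "\<dots> = card D" using card_Diff_subset[OF finite_subset[OF badD finD] badD] card_mono[OF finD badD] by simp
    finally show ?thesis .
  qed
  have c4: "E \<subseteq> B" unfolding E_def using D''B by auto
  have c5: "\<forall>j\<in>E. Suc j \<notin> E"
  proof (intro ballI notI)
    fix k assume k: "k \<in> E" "Suc k \<in> E"
    then have k': "k \<in> D''" "Suc k \<in> D''" "k \<notin> (\<lambda>j. j - 1) ` bad" unfolding E_def by auto
    show False
    proof (cases "k \<in> D' \<inter> A")
      case True
      show False
      proof (cases "Suc k \<in> D' \<inter> A")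
        case True then show False using \<open>k \<in> D' \<inter> A\<close> D'nc by auto
      next
        case False
        then obtain m where m: "m \<in> D'" "m \<notin> A" "Suc k = m - 1" using k' unfolding D''_def by auto
        then have mm: "Suc k \<in> D" "m = Suc (Suc k)" using D'A by auto
        have "Suc k \<in> bad" unfolding bad_def using mm(1) m(1) True by (simp add: mm(2)[symmetric])
        then have "k \<in> (\<lambda>j. j - 1) ` bad" by force
        then show False using k' by auto
      qed
    next
      case False
      then obtain m where m: "m \<in> D'" "m \<notin> A" "k = m - 1" using k' unfolding D''_def by auto
      then have kD: "k \<in> D" using D'A by auto
      show False
      proof (cases "Suc k \<in> D' \<inter> A")
        case True then show False using kD unfolding A_def by auto
      next
        case False
        then obtain m' where m': "m' \<in> D'" "m' \<notin> A" "Suc k = m' - 1" using k' unfolding D''_def by auto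
        then have "Suc k \<in> D" using D'A by auto
        then show False using kD Dnc by auto
      qed
    qed
  qed
  have c6: "card E \<le> card D'"
  proof -
    have "card E \<le> card D''" unfolding E_def
      using D''B finB by (meson card_mono finite_subset Diff_subset)
    also have "\<dots> \<le> card (D' \<inter> A) + card ((\<lambda>k. k - 1) ` (D' - A))" unfolding D''_def by (rule card_Un_le)
    also have "\<dots> \<le> card (D' \<inter> A) + card (D' - A)" using card_image_le finD' by (metis add_left_mono finite_Diff)
    also have "\<dots> = card D'" using card_Un_disjoint[of "D' \<inter> A" "D' - A"] finD'
      by (metis Int_Diff_Un Int_Diff_disjoint finite_Diff finite_Int)
    finally show ?thesis .
  qed
  show ?thesis unfolding F using G c1 c2 c3 c4 c5 c6 by simp
qed


definition BD :: "nat \<Rightarrow> nat set \<Rightarrow> nat set \<Rightarrow> nat set" where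
  "BD n B D = (B - D - Suc ` D) \<union> ((Suc ` D \<inter> {..n}) - B)"

lemma finite_nc: "finite B \<Longrightarrow> finite (nc t B)"
  unfolding nc_def by (rule finite_subset[of _ "Pow B"]) auto

lemma sum_le:
  assumes finB: "finite B" and B0: "0 \<notin> B"
  shows "(\<Sum>D\<in>nc t B. card (nc t (BD n B D))) \<le> card (nc t B) ^ 2"
proof -
  define SS where "SS = Sigma (nc t B) (\<lambda>D. nc t (BD n B D))"
  have finBD: "\<And>D. D \<in> nc t B \<Longrightarrow> finite (BD n B D)"
    unfolding BD_def nc_def using finB by (auto intro: finite_subset)
  have cS: "card SS = (\<Sum>D\<in>nc t B. card (nc t (BD n B D)))"
    unfolding SS_def by (rule card_SigmaI) (auto simp: finite_nc finB finBD)
  have key: "\<And>p. p \<in> SS \<Longrightarrow> Gm B (Fm B p) = p \<and> Fm B p \<in> nc t B \<times> nc t B"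
  proof -
    fix p assume "p \<in> SS"
    then obtain D D' where p: "p = (D, D')" and D: "D \<in> nc t B" and D': "D' \<in> nc t (BD n B D)"
      unfolding SS_def by auto
    have "D' \<subseteq> (B - D - Suc ` D) \<union> (Suc ` D - B)" using D' unfolding nc_def BD_def by auto
    from FG[OF finB B0 _ _ this] D D'
    show "Gm B (Fm B p) = p \<and> Fm B p \<in> nc t B \<times> nc t B"
      unfolding p nc_def by (auto simp: mem_Times_iff)
  qed
  have inj: "inj_on (Fm B) SS" by (rule inj_on_inverseI[of _ "Gm B"]) (use key in auto)
  have "card SS \<le> card (nc t B \<times> nc t B)"
  proof (rule card_inj_on_le[OF inj])
    show "Fm B ` SS \<subseteq> nc t B \<times> nc t B" using key by blast
  qed (simp add: finite_nc[OF finB])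
  then show ?thesis using cS by (simp add: card_cartesian_product power2_eq_square)
qed

lemma tangent:
  fixes a :: "'a \<Rightarrow> real"
  assumes "finite I" "I \<noteq> {}" "\<And>i. i \<in> I \<Longrightarrow> a i \<ge> 1" "(\<Sum>i\<in>I. a i) \<le> real (card I) ^ 2"
  shows "1 \<le> (\<Sum>i\<in>I. 1 / a i)"
proof -
  define N where "N = real (card I)"
  have N: "N > 0" unfolding N_def using assms(1,2) by (simp add: card_gt_0_iff)
  have pt: "2 / N - a i / N ^ 2 \<le> 1 / a i" if "i \<in> I" for i
  proof -
    have ai: "a i > 0" using assms(3)[OF that] by simp
    have "0 \<le> (N - a i) ^ 2" by simp
    then have "2 * a i * N - a i ^ 2 \<le> N ^ 2" by (simp add: power2_eq_square algebra_simps)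
    have e1: "2 / N - a i / N ^ 2 = (2 * a i * N - a i ^ 2) / (a i * N ^ 2)"
      using ai N by (simp add: field_simps power2_eq_square)
    have e2: "1 / a i = N ^ 2 / (a i * N ^ 2)" using ai N by simp
    have "(2 * a i * N - a i ^ 2) / (a i * N ^ 2) \<le> N ^ 2 / (a i * N ^ 2)"
      by (rule divide_right_mono) (use \<open>2 * a i * N - a i ^ 2 \<le> N ^ 2\<close> ai in auto)
    then show ?thesis using e1 e2 by simp
  qed
  have "(\<Sum>i\<in>I. 2 / N - a i / N ^ 2) \<le> (\<Sum>i\<in>I. 1 / a i)" by (rule sum_mono) (use pt in auto)
  moreover have "(\<Sum>i\<in>I. 2 / N - a i / N ^ 2) = 2 - (\<Sum>i\<in>I. a i) / N ^ 2"
    using N by (simp add: sum_subtractf sum_divide_distrib[symmetric] N_def)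
  moreover have "(\<Sum>i\<in>I. a i) / N ^ 2 \<le> 1" using assms(4) N unfolding N_def by simp
  ultimately show ?thesis by linarith
qed

definition bd :: "bool list \<Rightarrow> nat set" where
  "bd x = {j\<in>{2..length x}. x ! (j - 2) \<noteq> x ! (j - 1)}"

lemma phi_len[simp]: "length (phi n E x) = n"
  unfolding phi_def by simp

lemma phi_nth: "i < n \<Longrightarrow> phi n E x ! i = (if Suc i \<in> E then x ! (i - 1) else x ! i)"
proof -
  assume i: "i < n"
  have l: "length [1..<Suc n] = n" by simp
  have e: "[1..<Suc n] ! i = Suc i" using i by (simp del: upt_Suc)
  show ?thesis unfolding phi_def by (subst nth_map) (use i e in \<open>simp_all del: upt_Suc\<close>)
qed

lemma phi_restrict:
  assumes "E \<subseteq> {2..n}" "length x = n"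
  shows "phi n E x = phi n (E \<inter> bd x) x"
proof (rule nth_equalityI)
  fix i assume "i < length (phi n E x)"
  then have i: "i < n" by simp
  show "phi n E x ! i = phi n (E \<inter> bd x) x ! i"
  proof (cases "Suc i \<in> E")
    case True
    then have "i \<ge> 1" using assms(1) by auto
    then have "Suc i - 2 = i - 1" "Suc i - 1 = i" by auto
    then show ?thesis using True i assms unfolding phi_nth[OF i] bd_def by auto
  next
    case False then show ?thesis unfolding phi_nth[OF i] by auto
  qed
qed simp

lemma phi_diff:
  assumes "D \<subseteq> bd x" "length x = n" "i < n"
  shows "phi n D x ! i \<noteq> x ! i \<longleftrightarrow> Suc i \<in> D"
proof (cases "Suc i \<in> D")
  case True
  then have "Suc i \<in> bd x" using assms by auto
  then have "i \<ge> 1" "x ! (i - 1) \<noteq> x ! i" unfolding bd_def by auto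
  then show ?thesis using True unfolding phi_nth[OF assms(3)] by auto
qed (simp add: phi_nth[OF assms(3)])

lemma bd_sub: "bd x \<subseteq> {2..length x}" unfolding bd_def by auto

lemma phi_inj:
  assumes "length x = n" "D1 \<subseteq> bd x" "D2 \<subseteq> bd x" "phi n D1 x = phi n D2 x"
  shows "D1 = D2"
proof -
  have "j \<in> D1 \<longleftrightarrow> j \<in> D2" for j
  proof (cases "j \<in> {2..n}")
    case True
    then have i: "j - 1 < n" "Suc (j - 1) = j" by auto
    show ?thesis using phi_diff[OF assms(2,1) i(1)] phi_diff[OF assms(3,1) i(1)] assms(4) i(2) by simp
  next
    case False
    then have "j \<notin> bd x" using bd_sub[of x] assms(1) by auto
    then show ?thesis using assms(2,3) by auto
  qed
  then show ?thesis by auto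
qed

lemma Phi_eq:
  assumes "length x = n"
  shows "Phi n t x = (\<lambda>D. phi n D x) ` nc t (bd x)"
proof (intro set_eqI iffI)
  fix y assume "y \<in> Phi n t x"
  then obtain E where E: "grain_pattern n E" "card E \<le> t" "y = phi n E x"
    unfolding Phi_def grain_patterns_def by auto
  have E2: "E \<subseteq> {2..n}" using E(1) unfolding grain_pattern_def by auto
  have "finite E" using E2 finite_subset by blast
  then have "card (E \<inter> bd x) \<le> t" using E(2) by (meson card_mono inf_le1 order_trans)
  then have "E \<inter> bd x \<in> nc t (bd x)" using E(1) unfolding nc_def grain_pattern_def by auto
  moreover have "y = phi n (E \<inter> bd x) x" using phi_restrict[OF E2 assms] E(3) by simp
  ultimately show "y \<in> (\<lambda>D. phi n D x) ` nc t (bd x)" by auto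
next
  fix y assume "y \<in> (\<lambda>D. phi n D x) ` nc t (bd x)"
  then obtain D where D: "D \<in> nc t (bd x)" "y = phi n D x" by auto
  then have "grain_pattern n D" "card D \<le> t" using bd_sub[of x] assms unfolding nc_def grain_pattern_def by auto
  then show "y \<in> Phi n t x" unfolding Phi_def grain_patterns_def using D by auto
qed

lemma finite_bd: "finite (bd x)" using bd_sub finite_subset by blast

lemma card_Phi:
  assumes "length x = n"
  shows "card (Phi n t x) = card (nc t (bd x))"
  unfolding Phi_eq[OF assms]
  by (rule card_image, rule inj_onI, rule phi_inj[OF assms]) (auto simp: nc_def)

lemma finite_Phi: "length x = n \<Longrightarrow> finite (Phi n t x)"
  using Phi_eq finite_nc finite_bd by simp

lemma bd_phi:
  assumes "length x = n" "D \<in> nc t (bd x)"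
  shows "bd (phi n D x) = BD n (bd x) D"
proof (intro set_eqI)
  fix j
  have DB: "D \<subseteq> bd x" and Dnc: "\<forall>j\<in>D. Suc j \<notin> D" using assms(2) unfolding nc_def by auto
  show "j \<in> bd (phi n D x) \<longleftrightarrow> j \<in> BD n (bd x) D"
  proof (cases "j \<in> {2..n}")
    case False
    have "j \<notin> BD n (bd x) D" using False DB bd_sub[of x] assms(1) unfolding BD_def by force
    then show ?thesis using False unfolding bd_def by auto
  next
    case True
    then obtain k where k: "j = Suc (Suc k)" "Suc k < n"
      by (metis Suc_le_lessD atLeastAtMost_iff le_Suc_ex add_2_eq_Suc)
    have k2: "k < n" using k by simp
    have f1: "Suc k \<in> D \<Longrightarrow> k \<ge> 1 \<and> x ! (k - 1) \<noteq> x ! k"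
    proof -
      assume "Suc k \<in> D" then have "Suc k \<in> bd x" using DB by auto
      then show ?thesis unfolding bd_def by auto
    qed
    have f2: "Suc (Suc k) \<in> D \<Longrightarrow> x ! k \<noteq> x ! Suc k"
    proof -
      assume "Suc (Suc k) \<in> D" then have "Suc (Suc k) \<in> bd x" using DB by auto
      then show ?thesis unfolding bd_def by auto
    qed
    have f3: "\<not> (Suc k \<in> D \<and> Suc (Suc k) \<in> D)" using Dnc by auto
    have lhs: "j \<in> bd (phi n D x) \<longleftrightarrow> phi n D x ! k \<noteq> phi n D x ! Suc k"
      unfolding bd_def k(1) using k assms(1) by auto
    have bdj: "j \<in> bd x \<longleftrightarrow> x ! k \<noteq> x ! Suc k"
      unfolding bd_def k(1) using k assms(1) by auto
    have sucD: "j \<in> Suc ` D \<longleftrightarrow> Suc k \<in> D" unfolding k(1) by auto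
    have jn: "j \<in> {..n}" using True by auto
    show ?thesis unfolding lhs BD_def
    proof (cases "Suc k \<in> D")
      case c: True
      then have "Suc (Suc k) \<notin> D" "j \<in> Suc ` D" using f3 sucD by auto
      moreover have "x ! (k - 1) \<noteq> x ! k" using f1 c by auto
      ultimately show "(phi n D x ! k \<noteq> phi n D x ! Suc k) = (j \<in> bd x - D - Suc ` D \<union> (Suc ` D \<inter> {..n} - bd x))"
        unfolding phi_nth[OF k2] phi_nth[OF k(2)] using c bdj jn by (cases "x ! k"; cases "x ! Suc k"; cases "x ! (k - 1)"; simp)
    next
      case c: False
      show "(phi n D x ! k \<noteq> phi n D x ! Suc k) = (j \<in> bd x - D - Suc ` D \<union> (Suc ` D \<inter> {..n} - bd x))"
      proof (cases "Suc (Suc k) \<in> D")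
        case True
        then show ?thesis unfolding phi_nth[OF k2] phi_nth[OF k(2)] using c k(1) sucD by simp
      next
        case False
        then show ?thesis unfolding phi_nth[OF k2] phi_nth[OF k(2)] using c k(1) sucD bdj by simp
      qed
    qed
  qed
qed

lemma per_x:
  assumes "length x = n"
  shows "1 \<le> (\<Sum>y\<in>Phi n t x. 1 / real (card (Phi n t y)))"
proof -
  define NC where "NC = nc t (bd x)"
  have inj: "inj_on (\<lambda>D. phi n D x) NC"
    by (rule inj_onI, rule phi_inj[OF assms]) (auto simp: nc_def NC_def)
  have "(\<Sum>y\<in>Phi n t x. 1 / real (card (Phi n t y))) =
        (\<Sum>D\<in>NC. 1 / real (card (Phi n t (phi n D x))))"
    unfolding Phi_eq[OF assms] NC_def[symmetric] by (simp add: sum.reindex[OF inj])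
  also have "\<dots> = (\<Sum>D\<in>NC. 1 / real (card (nc t (BD n (bd x) D))))"
    by (rule sum.cong) (auto simp: card_Phi bd_phi[OF assms] NC_def)
  finally have eq: "(\<Sum>y\<in>Phi n t x. 1 / real (card (Phi n t y))) =
       (\<Sum>D\<in>NC. 1 / real (card (nc t (BD n (bd x) D))))" .
  have B0: "0 \<notin> bd x" using bd_sub by force
  have s: "(\<Sum>D\<in>NC. real (card (nc t (BD n (bd x) D)))) \<le> real (card NC) ^ 2"
    using sum_le[OF finite_bd B0, of t n] unfolding NC_def
    by (simp only: of_nat_sum[symmetric] of_nat_power[symmetric] of_nat_le_iff)
  have ne: "{} \<in> NC" unfolding NC_def nc_def by auto
  have ge1: "real (card (nc t (BD n (bd x) D))) \<ge> 1" if "D \<in> NC" for D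
  proof -
    have "finite (BD n (bd x) D)" using that finite_bd unfolding BD_def NC_def nc_def
      by (auto intro: finite_subset)
    then have "finite (nc t (BD n (bd x) D))" by (rule finite_nc)
    moreover have "{} \<in> nc t (BD n (bd x) D)" unfolding nc_def by auto
    ultimately have "card (nc t (BD n (bd x) D)) > 0"
      by (auto simp: card_gt_0_iff)
    then show ?thesis by simp
  qed
  have "1 \<le> (\<Sum>D\<in>NC. 1 / real (card (nc t (BD n (bd x) D))))"
  proof (rule tangent)
    show "finite NC" unfolding NC_def by (rule finite_nc[OF finite_bd])
    show "NC \<noteq> {}" using ne by blast
  qed (use ge1 s in auto)
  then show ?thesis using eq by simp
qed

lemma finite_words: "finite (words n)"
proof -
  have "words n = {xs. set xs \<subseteq> (UNIV :: bool set) \<and> length xs = n}" unfolding words_def by auto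
  then show ?thesis using finite_lists_length_eq[of "UNIV :: bool set" n] by simp
qed

lemma code_bound:
  assumes "grain_correcting n t C"
  shows "real (card C) \<le> (\<Sum>x\<in>words n. 1 / real (card (Phi n t x)))"
proof -
  define f where "f y = 1 / real (card (Phi n t y))" for y
  have Cw: "C \<subseteq> words n" using assms unfolding grain_correcting_def by auto
  have finC: "finite C" using Cw finite_words finite_subset by blast
  have len: "\<And>x. x \<in> C \<Longrightarrow> length x = n" using Cw unfolding words_def by auto
  have disj: "\<forall>i\<in>C. \<forall>j\<in>C. i \<noteq> j \<longrightarrow> Phi n t i \<inter> Phi n t j = {}"
    using assms unfolding grain_correcting_def confusable_def by auto
  have "real (card C) = (\<Sum>x\<in>C. 1)" by simp
  also have "\<dots> \<le> (\<Sum>x\<in>C. \<Sum>y\<in>Phi n t x. f y)"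
    by (rule sum_mono) (use per_x len f_def in auto)
  also have "\<dots> = (\<Sum>y\<in>(\<Union>x\<in>C. Phi n t x). f y)"
    by (rule sum.UNION_disjoint[symmetric]) (use finC finite_Phi len disj in auto)
  also have "\<dots> \<le> (\<Sum>y\<in>words n. f y)"
  proof (rule sum_mono2[OF finite_words])
    show "(\<Union>x\<in>C. Phi n t x) \<subseteq> words n"
      unfolding Phi_def words_def by auto
  qed (simp add: f_def)
  finally show ?thesis unfolding f_def .
qed

theorem theorem3p2:
  fixes n t :: nat
  assumes "n \<ge> 1" and "t \<in> {1, 2, 3}"
  shows "real (M n t) \<le> (\<Sum>x\<in>words n. 1 / real (card (Phi n t x)))"
proof -
  let ?S = "{card C | C. grain_correcting n t C}"
  have "?S \<subseteq> {..card (words n)}"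
    using finite_words by (auto simp: grain_correcting_def intro: card_mono)
  then have fin: "finite ?S" using finite_subset by blast
  have "grain_correcting n t {}" unfolding grain_correcting_def by auto
  then have ne: "?S \<noteq> {}" by blast
  obtain C where "grain_correcting n t C" "M n t = card C"
    using Max_in[OF fin ne] unfolding M_def by auto
  then show ?thesis using code_bound by simp
qed

end
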